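(* Let $u=(p,q)$ and $v=(r,s)$ be primitive vectors in $\mathbb{Z}^2$ with $\det(u,v)=ps-qr=n\ge 2$, let $d_\pm=\gcd(u\pm v)$ (the gcd of the coordinates of $u\pm v$), and let $a$ be the unique integer with $0\le a<n$ such that $Mu=(1,0)$ and $Mv=(a,n)$ for some $M\in\mathrm{SL}_2(\mathbb{Z})$. Then the following are equivalent: (i) $\max\{d_+,d_-\}=n$ and $\min\{d_+,d_-\}\in\{1,2\}$; (ii) $a\equiv\pm1\pmod n$; (iii) $u\equiv\pm v\pmod n$ (componentwise congruence). In this case the non-maximal thread degree $\min\{d_+,d_-\}$ equals $\gcd(n,2)$; in particular it equals $1$ if $n$ is odd and $2$ if $n$ is even.
   Context: A vector $(x,y)\in\mathbb{Z}^2$ is primitive if $\gcd(x,y)=1$. For such $u,v$ with $\det(u,v)=n\ge2$ there is $M\in\mathrm{SL}_2(\mathbb{Z})$ with $Mu=(1,0)$, $Mv=(a,n)$, $0\le a<n$, $\gcd(a,n)=1$, and $a$ is determined uniquely by these conditions. *)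

theory Defs
  imports Main "HOL-Number_Theory.Cong"
begin

text \<open>SL_2(Z) matrices are represented by their entries (m11, m12, m21, m22)
  with determinant 1; the matrix acts on column vectors (x, y).\<close>

definition sl2z_maps :: "int \<Rightarrow> int \<Rightarrow> int \<Rightarrow> int \<Rightarrow> int \<times> int \<Rightarrow> int \<times> int \<Rightarrow> bool" where
  "sl2z_maps m11 m12 m21 m22 w w' \<longleftrightarrow>
     (m11 * fst w + m12 * snd w, m21 * fst w + m22 * snd w) = w'"

definition is_sl2z :: "int \<Rightarrow> int \<Rightarrow> int \<Rightarrow> int \<Rightarrow> bool" where
  "is_sl2z m11 m12 m21 m22 \<longleftrightarrow> m11 * m22 - m12 * m21 = 1"

definition det2 :: "int \<times> int \<Rightarrow> int \<times> int \<Rightarrow> int" where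
  "det2 u v = fst u * snd v - snd u * fst v"

definition primitive :: "int \<times> int \<Rightarrow> bool" where
  "primitive u \<longleftrightarrow> gcd (fst u) (snd u) = 1"

definition vgcd :: "int \<times> int \<Rightarrow> int" where
  "vgcd u = gcd (fst u) (snd u)"

definition normal_a :: "int \<times> int \<Rightarrow> int \<times> int \<Rightarrow> int" where
  "normal_a u v = (THE a. 0 \<le> a \<and> a < det2 u v \<and>
     (\<exists>m11 m12 m21 m22. is_sl2z m11 m12 m21 m22 \<and>
        sl2z_maps m11 m12 m21 m22 u (1, 0) \<and>
        sl2z_maps m11 m12 m21 m22 v (a, det2 u v)))"

end

theory Submission
  imports Defs
begin

lemma gcd_transfer:
  fixes p q r s x y a n t :: int
  assumes b: "x*p + y*q = 1" and hr: "r = p*a - y*n" and hs: "s = q*a + x*n" and t: "t*t = 1"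
  shows "gcd (p + t*r) (q + t*s) = gcd (1 + t*a) n"
proof (rule zdvd_antisym_nonneg)
  have e1: "1 + t*a = x*(p + t*r) + y*(q + t*s)"
  proof -
    have "x*(p + t*r) + y*(q + t*s) = (x*p + y*q) + t*a*(x*p+y*q)"
      unfolding hr hs by (simp add: algebra_simps)
    then show ?thesis using b by simp
  qed
  have e2: "n = t*(p*(q + t*s) - q*(p + t*r))"
  proof -
    have "t*(p*(q + t*s) - q*(p + t*r)) = (t*t)*n*(x*p+y*q)"
      unfolding hr hs by (simp add: algebra_simps)
    then show ?thesis using b t by simp
  qed
  have e3: "p + t*r = p*(1+t*a) - t*y*n" unfolding hr by (simp add: algebra_simps)
  have e4: "q + t*s = q*(1+t*a) + t*x*n" unfolding hs by (simp add: algebra_simps)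
  show "gcd (p + t*r) (q + t*s) dvd gcd (1 + t*a) n"
    apply (rule gcd_greatest)
    apply (subst e1) apply simp
    apply (subst e2) apply simp
    done
  show "gcd (1 + t*a) n dvd gcd (p + t*r) (q + t*s)"
    apply (rule gcd_greatest)
    apply (subst e3) apply simp
    apply (subst e4) apply simp
    done
qed auto

theorem mainTheorem3:
  fixes p q r s :: int
  defines "u \<equiv> (p, q)" and "v \<equiv> (r, s)"
  defines "n \<equiv> det2 u v"
  defines "dp \<equiv> vgcd (p + r, q + s)" and "dm \<equiv> vgcd (p - r, q - s)"
  defines "a \<equiv> normal_a u v"
  assumes "primitive u" and "primitive v" and "n \<ge> 2"
  shows "((max dp dm = n \<and> min dp dm \<in> {1, 2}) \<longleftrightarrow>
            ([a = 1] (mod n) \<or> [a = -1] (mod n)))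
       \<and> (([a = 1] (mod n) \<or> [a = -1] (mod n)) \<longleftrightarrow>
            (([p = r] (mod n) \<and> [q = s] (mod n)) \<or>
             ([p = - r] (mod n) \<and> [q = - s] (mod n))))
       \<and> ((max dp dm = n \<and> min dp dm \<in> {1, 2}) \<longrightarrow>
            min dp dm = gcd n 2 \<and>
            (odd n \<longrightarrow> min dp dm = 1) \<and> (even n \<longrightarrow> min dp dm = 2))"
proof -
  have n: "n = p*s - q*r" unfolding n_def det2_def u_def v_def by simp
  have n2: "n \<ge> 2" by fact
  have gpq: "gcd p q = 1" using assms(7) unfolding primitive_def u_def by simp
  obtain x y where xy: "x*p + y*q = 1" using bezout_int[of p q] gpq by auto
  define b where "b = x*r + y*s"
  define k where "k = b div n"
  define x' where "x' = x + k*q"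
  define y' where "y' = y - k*p"
  define a0 where "a0 = b mod n"
  have xy': "x'*p + y'*q = 1" unfolding x'_def y'_def using xy by (simp add: algebra_simps)
  have a0e: "a0 = x'*r + y'*s"
  proof -
    have "b = k*n + a0" unfolding k_def a0_def by simp
    then show ?thesis unfolding x'_def y'_def b_def n by (simp add: algebra_simps)
  qed
  have a0r: "0 \<le> a0" "a0 < n" using n2 unfolding a0_def by auto
  define P where "P = (\<lambda>a. 0 \<le> a \<and> a < det2 u v \<and>
     (\<exists>m11 m12 m21 m22. is_sl2z m11 m12 m21 m22 \<and>
        sl2z_maps m11 m12 m21 m22 u (1, 0) \<and>
        sl2z_maps m11 m12 m21 m22 v (a, det2 u v)))"
  have Pa0: "P a0"
    unfolding P_def
  proof (intro conjI exI)
    show "0 \<le> a0" "a0 < det2 u v" using a0r n_def by auto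
    show "is_sl2z x' y' (-q) p" unfolding is_sl2z_def using xy' by (simp add: algebra_simps)
    show "sl2z_maps x' y' (-q) p u (1, 0)" unfolding sl2z_maps_def u_def using xy'
      by (simp add: algebra_simps)
    show "sl2z_maps x' y' (-q) p v (a0, det2 u v)" unfolding sl2z_maps_def u_def v_def det2_def
      using a0e by (simp add: algebra_simps)
  qed
  have uniq: "a' = a0" if "P a'" for a'
  proof -
    from that obtain m11 m12 m21 m22 where h: "0 \<le> a'" "a' < n"
      "m11*p + m12*q = 1" "m11*r + m12*s = a'"
      unfolding P_def sl2z_maps_def u_def v_def n_def by auto
    define al where "al = m11 - x'"
    define be where "be = m12 - y'"
    have z: "al*p + be*q = 0" unfolding al_def be_def using h(3) xy' by (simp add: algebra_simps)
    have d: "a' - a0 = al*r + be*s" unfolding al_def be_def using h(4) a0e by (simp add: algebra_simps)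
    have "(a' - a0)*p - be*n = (al*p+be*q)*r" unfolding d n by (simp add: algebra_simps)
    then have "(a' - a0)*p - be*n = 0" unfolding z by simp
    then have "(a' - a0)*p = be*n" by simp
    moreover have "(a' - a0)*q + al*n = (al*p+be*q)*s" unfolding d n by (simp add: algebra_simps)
    then have "(a' - a0)*q + al*n = 0" unfolding z by simp
    then have "(a' - a0)*q = -al*n" by simp
    ultimately have "n dvd (a' - a0)*p" "n dvd (a' - a0)*q" by simp_all
    then have "n dvd x*((a' - a0)*p) + y*((a' - a0)*q)" by simp
    moreover have "x*((a' - a0)*p) + y*((a' - a0)*q) = a' - a0"
      using xy by (metis mult.commute mult.left_commute distrib_left mult.right_neutral)
    ultimately have "n dvd a' - a0" by simp
    then obtain c where c: "a' - a0 = n*c" by blast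
    have "c = 0"
    proof (rule ccontr)
      assume "c \<noteq> 0"
      then have "c \<ge> 1 \<or> c \<le> -1" by auto
      then show False
      proof
        assume "c \<ge> 1" then have "n*c \<ge> n" using n2 by simp
        then show False using c h a0r by linarith
      next
        assume "c \<le> -1" then have "n*c \<le> -n" using n2
          by (metis mult_left_mono mult_minus1_right order_le_less_trans less_imp_le not_le zero_le_numeral order.trans)
        then show False using c h a0r by linarith
      qed
    qed
    then show ?thesis using c by simp
  qed
  have aeq: "a = a0"
    unfolding a_def normal_a_def P_def[symmetric]
    using Pa0 uniq by (rule the_equality)
  have hr0: "p*a0 - y'*n = r*(x'*p+y'*q)" unfolding n a0e by (simp add: algebra_simps)
  have hr: "r = p*a0 - y'*n" using hr0 xy' by simp
  have hs0: "q*a0 + x'*n = s*(x'*p+y'*q)" unfolding n a0e by (simp add: algebra_simps)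
  have hs: "s = q*a0 + x'*n" using hs0 xy' by simp
  have dpe: "dp = gcd (a0 + 1) n"
    using gcd_transfer[OF xy' hr hs, of 1] unfolding dp_def vgcd_def by (simp add: add.commute)
  have dme: "dm = gcd (a0 - 1) n"
  proof -
    have "dm = gcd (1 - a0) n"
      using gcd_transfer[OF xy' hr hs, of "-1"] unfolding dm_def vgcd_def by simp
    also have "\<dots> = gcd (a0 - 1) n" by (metis gcd_neg1_int minus_diff_eq)
    finally show ?thesis .
  qed
  have small: "d = 0" if "n dvd d" "-n < d" "d < n" for d
    using that dvd_imp_le_int[of d n] by (cases "d = 0") auto
  have c1: "[a0 = 1] (mod n) \<longleftrightarrow> a0 = 1"
  proof
    assume "[a0 = 1] (mod n)"
    then have "n dvd a0 - 1" by (simp add: cong_iff_dvd_diff)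
    then show "a0 = 1" using small[of "a0 - 1"] a0r n2 by simp
  qed simp
  have c2: "[a0 = -1] (mod n) \<longleftrightarrow> a0 = n - 1"
  proof
    assume "[a0 = -1] (mod n)"
    then have "n dvd a0 + 1" by (simp add: cong_iff_dvd_diff)
    then have "n dvd a0 + 1 - n" by (simp add: dvd_diff)
    then show "a0 = n - 1" using small[of "a0 + 1 - n"] a0r n2 by simp
  next
    assume "a0 = n - 1"
    then show "[a0 = -1] (mod n)" by (simp add: cong_iff_dvd_diff)
  qed
  define g where "g = gcd 2 n"
  have g2: "g dvd 2" unfolding g_def by simp
  have gpos: "g > 0" unfolding g_def using n2 by simp
  have g12: "g = 1 \<or> g = 2" using zdvd_imp_le[OF g2] gpos by auto
  have gle: "g \<le> n" using zdvd_imp_le[of g n] n2 unfolding g_def by simp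
  have geven: "even n \<longleftrightarrow> g = 2"
  proof
    assume "even n" then show "g = 2" unfolding g_def using gcd_unique_int[of 2 2 n] by auto
  next
    assume "g = 2" then show "even n" unfolding g_def by (metis gcd_dvd2)
  qed
  have gn: "gcd n 2 = g" unfolding g_def by (simp add: gcd.commute)
  have dpn: "dp = n \<longleftrightarrow> a0 = n - 1"
  proof
    assume "dp = n" then have "n dvd a0 + 1" unfolding dpe by (metis gcd_dvd1)
    then have "n dvd a0 + 1 - n" by (simp add: dvd_diff)
    then show "a0 = n - 1" using small[of "a0 + 1 - n"] a0r n2 by simp
  next
    assume "a0 = n - 1" then show "dp = n" unfolding dpe using n2 by simp
  qed
  have dmn: "dm = n \<longleftrightarrow> a0 = 1"
  proof
    assume "dm = n" then have "n dvd a0 - 1" unfolding dme by (metis gcd_dvd1)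
    then show "a0 = 1" using small[of "a0 - 1"] a0r n2 by simp
  next
    assume "a0 = 1" then show "dm = n" unfolding dme using n2 by simp
  qed
  have case1: "a0 = 1 \<Longrightarrow> dp = g \<and> dm = n"
    unfolding dpe dme g_def using n2 by simp
  have case2: "a0 = n - 1 \<Longrightarrow> dp = n \<and> dm = g"
  proof -
    assume h: "a0 = n - 1"
    have "gcd (n - 2) n = gcd 2 n" using gcd_add2[of n "-2"] by (simp add: gcd.commute)
    then show ?thesis unfolding dpe dme g_def h using n2 by simp
  qed
  have part1: "(max dp dm = n \<and> min dp dm \<in> {1, 2}) \<longleftrightarrow> (a0 = 1 \<or> a0 = n - 1)"
  proof
    assume "max dp dm = n \<and> min dp dm \<in> {1, 2}"
    then have "dp = n \<or> dm = n" by (metis max_def)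
    then show "a0 = 1 \<or> a0 = n - 1" using dpn dmn by blast
  next
    assume "a0 = 1 \<or> a0 = n - 1"
    then show "max dp dm = n \<and> min dp dm \<in> {1, 2}" using case1 case2 g12 gle by auto
  qed
  have part3: "a0 = 1 \<or> a0 = n - 1 \<Longrightarrow> min dp dm = g"
    using case1 case2 gle by auto
  have e1: "p - r = p*(1-a0) + y'*n" unfolding hr by (simp add: algebra_simps)
  have e2: "q - s = q*(1-a0) - x'*n" unfolding hs by (simp add: algebra_simps)
  have e3: "p + r = p*(1+a0) - y'*n" unfolding hr by (simp add: algebra_simps)
  have e4: "q + s = q*(1+a0) + x'*n" unfolding hs by (simp add: algebra_simps)
  have e5: "a0 - 1 = -(x'*(p-r) + y'*(q-s))" using a0e xy' by (simp add: algebra_simps)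
  have e6: "a0 + 1 = x'*(p+r) + y'*(q+s)" using a0e xy' by (simp add: algebra_simps)
  have m1: "n dvd a0 - 1 \<longleftrightarrow> n dvd p - r \<and> n dvd q - s"
  proof
    assume h: "n dvd a0 - 1"
    then have h': "n dvd 1 - a0" by (metis dvd_minus_iff minus_diff_eq)
    show "n dvd p - r \<and> n dvd q - s" unfolding e1 e2 using h' by simp
  next
    assume "n dvd p - r \<and> n dvd q - s"
    then show "n dvd a0 - 1" unfolding e5 by simp
  qed
  have m2: "n dvd a0 + 1 \<longleftrightarrow> n dvd p + r \<and> n dvd q + s"
  proof
    assume h: "n dvd a0 + 1"
    then have h': "n dvd 1 + a0" by (simp add: add.commute)
    show "n dvd p + r \<and> n dvd q + s" unfolding e3 e4 using h' by simp
  next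
    assume "n dvd p + r \<and> n dvd q + s"
    then show "n dvd a0 + 1" unfolding e6 by simp
  qed
  have part2: "([a0 = 1] (mod n) \<or> [a0 = -1] (mod n)) \<longleftrightarrow>
            (([p = r] (mod n) \<and> [q = s] (mod n)) \<or>
             ([p = - r] (mod n) \<and> [q = - s] (mod n)))"
    using m1 m2 by (simp add: cong_iff_dvd_diff)
  show ?thesis unfolding aeq using part1 part2 part3 c1 c2 geven g12 gn by auto
qed

end
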